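(* Let $q\ge1$, $d\ge1$, and $\mathcal{D}=\{(b_1,B_1),\ldots,(b_d,B_d)\}\subseteq[q]\times2^{[q]}$ with $|B_i|\ge2$ for all $i\in[d]$. Then $\mathcal{E}_{\mathcal{D}}=\mathcal{E}_{\mathcal{D}^\circ}=\mathcal{E}_{\overline{\mathcal{D}}}=\mathcal{E}_{\min(\mathcal{D})}=\mathcal{E}_{\min(\overline{\mathcal{D}})}=\mathcal{E}_{\min(\mathcal{D}^\circ)}$.
   Context: With $\Lambda=[q]$: a pair $(b,B)$ is trivial if $b\in B$; $(b,B)^{\sf ex}=\{(b,C):B\subseteq C\subseteq\Lambda\}$; $(b,B)\circ(c,C)=(b,(B\smallsetminus\{c\})\cup C)$; for a set $\mathcal{D}$ of pairs, $\mathcal{D}^\circ$ is the set of all compositions $(c_1,C_1)\circ\cdots\circ(c_s,C_s)$, $s\ge1$, $(c_i,C_i)\in\mathcal{D}$, with all possible bracketings; $\mathcal{D}^{\sf ex}$ is the union of extensions of elements of $\mathcal{D}$; $\Lambda^{\sf triv}=\{(b,B):b\in B\}$; $\overline{\mathcal{D}}=(\mathcal{D}^\circ)^{\sf ex}\cup\Lambda^{\sf triv}$; $\min(\mathcal{D})$ is the set of nontrivial $(b,B)\in\mathcal{D}$ such that no $(b,C)\in\mathcal{D}$ has $C\subsetneq B$. $\mathcal{D}$-extremal ideals: $S_{[q]}=\mathsf k[y_A:\emptyset\ne A\subseteq[q]]$ over a field $\mathsf k$; for $\mathcal{D}'\subseteq[q]\times(2^{[q]}\smallsetminus\{\emptyset\})$,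 $Q(\mathcal{D}')=\{A\subseteq[q]:A\ne\emptyset,\ A\cap B\ne\emptyset\text{ for all }(b,B)\in\mathcal{D}'\text{ with }b\in A\}$, $\varepsilon_{\mathcal{D}',i}=\prod_{A\in Q(\mathcal{D}'),\,i\in A}y_A$, and $\mathcal{E}_{\mathcal{D}'}=(\varepsilon_{\mathcal{D}',1},\ldots,\varepsilon_{\mathcal{D}',q})$. *)

theory Defs
  imports "HOL-Library.Poly_Mapping"
begin

type_synonym pair = "nat \<times> nat set"

definition Lam :: "nat \<Rightarrow> nat set" where
  "Lam q = {1..q}"

definition trivial_pair :: "pair \<Rightarrow> bool" where
  "trivial_pair p \<longleftrightarrow> fst p \<in> snd p"

definition comp_pair :: "pair \<Rightarrow> pair \<Rightarrow> pair" (infixl "\<circ>\<^sub>p" 70) where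
  "comp_pair p r = (fst p, (snd p - {fst r}) \<union> snd r)"

inductive_set comp_closure :: "pair set \<Rightarrow> pair set" for D where
  base: "p \<in> D \<Longrightarrow> p \<in> comp_closure D"
| comp: "p \<in> comp_closure D \<Longrightarrow> r \<in> comp_closure D \<Longrightarrow> comp_pair p r \<in> comp_closure D"

definition ext_pair :: "nat \<Rightarrow> pair \<Rightarrow> pair set" where
  "ext_pair q p = {(fst p, C) | C. snd p \<subseteq> C \<and> C \<subseteq> Lam q}"

definition ext_set :: "nat \<Rightarrow> pair set \<Rightarrow> pair set" where
  "ext_set q D = (\<Union>p\<in>D. ext_pair q p)"

definition triv_set :: "nat \<Rightarrow> pair set" where
  "triv_set q = {(b, B). B \<subseteq> Lam q \<and> b \<in> B}"

definition closure_bar :: "nat \<Rightarrow> pair set \<Rightarrow> pair set" where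
  "closure_bar q D = ext_set q (comp_closure D) \<union> triv_set q"

definition min_pairs :: "pair set \<Rightarrow> pair set" where
  "min_pairs D = {(b, B) \<in> D. b \<notin> B \<and> \<not> (\<exists>C. (b, C) \<in> D \<and> C \<subset> B)}"

text \<open>The polynomial ring S_[q] = k[y_A : {} \<noteq> A \<subseteq> [q]], realised as the
  subring of k[y_A : A :: nat set] (poly_mapping representation) consisting of
  polynomials involving only the variables y_A with {} \<noteq> A \<subseteq> [q].\<close>
type_synonym 'k mpoly = "(nat set \<Rightarrow>\<^sub>0 nat) \<Rightarrow>\<^sub>0 'k"

definition S_ring :: "nat \<Rightarrow> ('k::field) mpoly set" where
  "S_ring q = {p :: 'k mpoly. \<forall>m \<in> Poly_Mapping.keys p. \<forall>A \<in> Poly_Mapping.keys m. A \<noteq> {} \<and> A \<subseteq> Lam q}"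

definition var_y :: "nat set \<Rightarrow> ('k::field) mpoly" where
  "var_y A = Poly_Mapping.single (Poly_Mapping.single A 1) 1"

definition ideal_gen :: "nat \<Rightarrow> ('k::field) mpoly set \<Rightarrow> 'k mpoly set" where
  "ideal_gen q G = {x. \<exists>F r. finite F \<and> F \<subseteq> G \<and> (\<forall>g\<in>F. r g \<in> S_ring q)
                         \<and> x = (\<Sum>g\<in>F. r g * g)}"

definition Qset :: "nat \<Rightarrow> pair set \<Rightarrow> nat set set" where
  "Qset q D = {A. A \<subseteq> Lam q \<and> A \<noteq> {} \<and> (\<forall>(b, B) \<in> D. b \<in> A \<longrightarrow> A \<inter> B \<noteq> {})}"

definition eps :: "nat \<Rightarrow> pair set \<Rightarrow> nat \<Rightarrow> ('k::field) mpoly" where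
  "eps q D i = (\<Prod>A \<in> {A \<in> Qset q D. i \<in> A}. var_y A)"

definition extremal_ideal :: "nat \<Rightarrow> pair set \<Rightarrow> ('k::field) mpoly set" where
  "extremal_ideal q D = ideal_gen q (eps q D ` Lam q)"

end

theory Submission
  imports Defs
begin

lemma Qset_mono: "X \<subseteq> Y \<Longrightarrow> Qset q Y \<subseteq> Qset q X"
  unfolding Qset_def by blast

lemma comp_closure_Q:
  assumes "A \<in> Qset q D" "p \<in> comp_closure D" "fst p \<in> A"
  shows "A \<inter> snd p \<noteq> {}"
  using assms(2,3)
proof (induction p rule: comp_closure.induct)
  case (base p)
  then show ?case using assms(1) unfolding Qset_def by (cases p) auto
next
  case (comp p r)
  then show ?case unfolding comp_pair_def by auto
qed

lemma Q_comp: "Qset q (comp_closure D) = Qset q D"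
proof
  show "Qset q (comp_closure D) \<subseteq> Qset q D"
    by (rule Qset_mono) (auto intro: comp_closure.base)
  show "Qset q D \<subseteq> Qset q (comp_closure D)"
  proof
    fix A assume A: "A \<in> Qset q D"
    then show "A \<in> Qset q (comp_closure D)"
      using comp_closure_Q[OF A] unfolding Qset_def by fastforce
  qed
qed

lemma comp_closure_sub:
  assumes "\<forall>p\<in>D. snd p \<subseteq> Lam q" "p \<in> comp_closure D"
  shows "snd p \<subseteq> Lam q"
  using assms(2) by induction (use assms(1) in \<open>auto simp: comp_pair_def\<close>)

lemma Q_bar:
  assumes "\<forall>p\<in>D. snd p \<subseteq> Lam q"
  shows "Qset q (closure_bar q D) = Qset q D"
proof
  have "comp_closure D \<subseteq> closure_bar q D"
    using comp_closure_sub[OF assms]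
    unfolding closure_bar_def ext_set_def ext_pair_def by force
  then show "Qset q (closure_bar q D) \<subseteq> Qset q D"
    using Qset_mono Q_comp by metis
  show "Qset q D \<subseteq> Qset q (closure_bar q D)"
  proof
    fix A assume A: "A \<in> Qset q D"
    then have A': "A \<in> Qset q (comp_closure D)" using Q_comp by blast
    show "A \<in> Qset q (closure_bar q D)"
      unfolding Qset_def
    proof (intro CollectI conjI ballI)
      show "A \<subseteq> Lam q" "A \<noteq> {}" using A unfolding Qset_def by auto
      fix x assume x: "x \<in> closure_bar q D"
      show "case x of (b, B) \<Rightarrow> b \<in> A \<longrightarrow> A \<inter> B \<noteq> {}"
      proof (cases "x \<in> triv_set q")
        case True then show ?thesis unfolding triv_set_def by auto
      next
        case False
        then obtain p C where p: "p \<in> comp_closure D" "x = (fst p, C)" "snd p \<subseteq> C"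
          using x unfolding closure_bar_def ext_set_def ext_pair_def by auto
        then show ?thesis using comp_closure_Q[OF A p(1)] by auto
      qed
    qed
  qed
qed

lemma Q_min:
  assumes "\<forall>p\<in>X. finite (snd p)"
  shows "Qset q (min_pairs X) = Qset q X"
proof
  show "Qset q X \<subseteq> Qset q (min_pairs X)"
    by (rule Qset_mono) (auto simp: min_pairs_def)
  show "Qset q (min_pairs X) \<subseteq> Qset q X"
  proof
    fix A assume A: "A \<in> Qset q (min_pairs X)"
    have key: "\<And>b B. (b, B) \<in> X \<Longrightarrow> b \<in> A \<Longrightarrow> A \<inter> B \<noteq> {}"
    proof -
      fix b B
      show "(b, B) \<in> X \<Longrightarrow> b \<in> A \<Longrightarrow> A \<inter> B \<noteq> {}"
      proof (induction "card B" arbitrary: B rule: less_induct)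
        case less
        show ?case
        proof (cases "b \<in> B")
          case True then show ?thesis using less by auto
        next
          case nb: False
          show ?thesis
          proof (cases "(b, B) \<in> min_pairs X")
            case True then show ?thesis using A less.prems unfolding Qset_def by blast
          next
            case False
            then obtain C where C: "(b, C) \<in> X" "C \<subset> B"
              using nb less.prems unfolding min_pairs_def by auto
            have "finite B" using assms less.prems by auto
            then have "card C < card B" using C psubset_card_mono by blast
            then have "A \<inter> C \<noteq> {}" using less C by blast
            then show ?thesis using C by blast
          qed
        qed
      qed
    qed
    show "A \<in> Qset q X" using A key unfolding Qset_def by auto
  qed
qed

theorem lemma3p10:
  fixes q d :: nat and b :: "nat \<Rightarrow> nat" and B :: "nat \<Rightarrow> nat set" and D :: "pair set"
  assumes "q \<ge> 1" and "d \<ge> 1"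
    and "D = (\<lambda>i. (b i, B i)) ` {1..d}"
    and "\<forall>i\<in>{1..d}. b i \<in> Lam q \<and> B i \<subseteq> Lam q"
    and "\<forall>i\<in>{1..d}. card (B i) \<ge> 2"
  shows "(extremal_ideal q D :: ('k::field) mpoly set) = extremal_ideal q (comp_closure D)
       \<and> extremal_ideal q (comp_closure D) = (extremal_ideal q (closure_bar q D) :: 'k mpoly set)
       \<and> extremal_ideal q (closure_bar q D) = (extremal_ideal q (min_pairs D) :: 'k mpoly set)
       \<and> extremal_ideal q (min_pairs D) = (extremal_ideal q (min_pairs (closure_bar q D)) :: 'k mpoly set)
       \<and> extremal_ideal q (min_pairs (closure_bar q D)) = (extremal_ideal q (min_pairs (comp_closure D)) :: 'k mpoly set)"
proof -
  have DL: "\<forall>p\<in>D. snd p \<subseteq> Lam q" using assms(3,4) by auto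
  have fin: "finite (Lam q)" by (simp add: Lam_def)
  have cL: "\<forall>p\<in>comp_closure D. snd p \<subseteq> Lam q" using comp_closure_sub[OF DL] by blast
  have bL: "\<forall>p\<in>closure_bar q D. snd p \<subseteq> Lam q"
    using cL unfolding closure_bar_def ext_set_def ext_pair_def triv_set_def by auto
  have q1: "Qset q (comp_closure D) = Qset q D" by (rule Q_comp)
  have q2: "Qset q (closure_bar q D) = Qset q D" by (rule Q_bar[OF DL])
  have q3: "Qset q (min_pairs D) = Qset q D"
    by (rule Q_min) (use DL fin finite_subset in blast)
  have q4: "Qset q (min_pairs (closure_bar q D)) = Qset q D"
    using q2 Q_min[of "closure_bar q D" q] bL fin finite_subset by metis
  have q5: "Qset q (min_pairs (comp_closure D)) = Qset q D"
    using q1 Q_min[of "comp_closure D" q] cL fin finite_subset by metis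
  show ?thesis unfolding extremal_ideal_def eps_def using q1 q2 q3 q4 q5 by simp
qed

end
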